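(* Let $n\ge1$, $\theta_y=y\pi/n$ for $y=0,\dots,n-1$. The set of pairs $(\mathsf T_n,\mathsf W_n)$ attainable by LHS assemblages $\{\rho_{b|y}\}$ on $\mathbb C^2$ is exactly the convex polygon whose vertices are the $2(n+1)$ points (coinciding at $k=0$) $$\left(\frac kn,\ \pm\frac{\sin\left(\frac{\pi}{2}\frac kn\right)}{n\sin\left(\frac{\pi}{2n}\right)}\right),\qquad k=0,1,\dots,n,$$ and each of these points is an extreme point of the set.
   Context: An LHS assemblage on $\mathbb C^2$ with inputs $y\in\{0,\dots,n-1\}$ and outcomes $b\in\{0,1,\varnothing\}$ is $\rho_{b|y}=\sum_\lambda p(b|y,\lambda)\rho_\lambda$, where $\{\rho_\lambda\}$ is a finite family of positive semidefinite $2\times2$ matrices with $\sum_\lambda\mathrm{tr}\rho_\lambda=1$ and $p(b|y,\lambda)$ are conditional probabilities. With $Z,X$ the Pauli matrices, define $\mathsf W_n:=\frac1n\sum_{y=0}^{n-1}\mathrm{tr}\big[(\cos\theta_y Z+\sin\theta_y X)(\rho_{0|y}-\rho_{1|y})\big]$ and $\mathsf T_n:=\frac1n\sum_{y=0}^{n-1}\mathrm{tr}(\rho_{0|y}+\rho_{1|y})$. *)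

theory Defs
  imports "HOL-Analysis.Analysis"
begin

text \<open>2x2 complex matrices are modelled as \<open>complex^2^2\<close>; the index type \<open>2\<close> has
  the two elements 0 and 1 (basis vectors |0>, |1>).\<close>

type_synonym cmat2 = "complex^2^2"

datatype outcome = B0 | B1 | BNone

definition tr2 :: "cmat2 \<Rightarrow> complex" where
  "tr2 A = (\<Sum>i\<in>UNIV. A$i$i)"

definition psd2 :: "cmat2 \<Rightarrow> bool" where
  "psd2 A \<longleftrightarrow> (\<forall>v::complex^2.
     Im (\<Sum>i\<in>UNIV. \<Sum>j\<in>UNIV. cnj (v$i) * A$i$j * v$j) = 0 \<and>
     Re (\<Sum>i\<in>UNIV. \<Sum>j\<in>UNIV. cnj (v$i) * A$i$j * v$j) \<ge> 0)"

definition pauliZ :: cmat2 where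
  "pauliZ = (\<chi> i j. if i = j then (if i = 0 then 1 else -1) else 0)"

definition pauliX :: cmat2 where
  "pauliX = (\<chi> i j. if i = j then 0 else 1)"

definition LHS_assemblage :: "nat \<Rightarrow> (outcome \<Rightarrow> nat \<Rightarrow> cmat2) \<Rightarrow> bool" where
  "LHS_assemblage n rho \<longleftrightarrow>
     (\<exists>(m::nat) (rl::nat \<Rightarrow> cmat2) (p::outcome \<Rightarrow> nat \<Rightarrow> nat \<Rightarrow> real).
        (\<forall>l<m. psd2 (rl l)) \<and> (\<Sum>l<m. tr2 (rl l)) = 1 \<and>
        (\<forall>y<n. \<forall>l<m. (\<forall>b. p b y l \<ge> 0) \<and> p B0 y l + p B1 y l + p BNone y l = 1) \<and>
        (\<forall>b. \<forall>y<n. rho b y = (\<Sum>l<m. p b y l *\<^sub>R rl l)))"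

definition theta :: "nat \<Rightarrow> nat \<Rightarrow> real" where
  "theta n y = real y * pi / real n"

text \<open>The quantities are real for every assemblage; we take real parts.\<close>
definition W_n :: "nat \<Rightarrow> (outcome \<Rightarrow> nat \<Rightarrow> cmat2) \<Rightarrow> real" where
  "W_n n rho = Re ((1 / of_nat n) * (\<Sum>y<n.
      tr2 ((of_real (cos (theta n y)) *s pauliZ + of_real (sin (theta n y)) *s pauliX)
           ** (rho B0 y - rho B1 y))))"

definition T_n :: "nat \<Rightarrow> (outcome \<Rightarrow> nat \<Rightarrow> cmat2) \<Rightarrow> real" where
  "T_n n rho = Re ((1 / of_nat n) * (\<Sum>y<n. tr2 (rho B0 y + rho B1 y)))"

definition attainable :: "nat \<Rightarrow> (real \<times> real) set" where
  "attainable n = {(T_n n rho, W_n n rho) | rho. LHS_assemblage n rho}"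

definition polygon_vertices :: "nat \<Rightarrow> (real \<times> real) set" where
  "polygon_vertices n = {(real k / real n,
       s * sin (pi / 2 * (real k / real n)) / (real n * sin (pi / (2 * real n)))) | k s.
       k \<le> n \<and> s \<in> {-1, 1}}"

end

theory Submission imports Defs begin

lemma pair_bound:
  fixes x x' a :: real
  assumes "-(pi/2) \<le> x" "x \<le> pi/2" "-(pi/2) \<le> x'" "x' \<le> pi/2" "2*\<bar>a\<bar> \<le> \<bar>x - x'\<bar>"
  shows "cos x + cos x' \<le> 2 * cos a"
proof -
  define h where "h = \<bar>x - x'\<bar>/2"
  have ch: "cos ((x - x')/2) = cos h"
    unfolding h_def by (cases "x - x' \<ge> 0") (simp_all add: abs_if, metis cos_minus minus_diff_eq minus_divide_left)
  have h1: "\<bar>a\<bar> \<le> h" "h \<le> pi/2" using assms unfolding h_def by auto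
  have c0: "0 \<le> cos h" using h1 by (intro cos_ge_zero) auto
  have "cos x + cos x' = 2 * cos ((x + x')/2) * cos h" using cos_plus_cos[of x x'] ch by simp
  also have "\<dots> \<le> 2 * 1 * cos h" using c0 by (intro mult_right_mono) auto
  also have "\<dots> \<le> 2 * cos \<bar>a\<bar>" using h1 cos_monotone_0_pi_le[of "\<bar>a\<bar>" h] by simp
  also have "cos \<bar>a\<bar> = cos a" by (simp add: abs_if)
  finally show ?thesis by simp
qed

lemma gap:
  fixes xs :: "real list"
  assumes s: "sorted_wrt (<) xs" and sep: "\<forall>x\<in>set xs. \<forall>y\<in>set xs. x \<noteq> y \<longrightarrow> d \<le> \<bar>x - y\<bar>"
  shows "i \<le> j \<Longrightarrow> j < length xs \<Longrightarrow> (real j - real i) * d \<le> xs!j - xs!i"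
proof (induction j)
  case 0 then show ?case by simp
next
  case (Suc j)
  show ?case
  proof (cases "i = Suc j")
    case True then show ?thesis by simp
  next
    case False
    then have ij: "i \<le> j" using Suc by simp
    have lt: "xs!j < xs!(Suc j)" using s Suc by (simp add: sorted_wrt_nth_less)
    have "d \<le> \<bar>xs!(Suc j) - xs!j\<bar>" using sep Suc lt by (metis Suc_lessD less_irrefl nth_mem)
    then have "d \<le> xs!(Suc j) - xs!j" using lt by simp
    moreover have "(real j - real i) * d \<le> xs!j - xs!i" using Suc ij by simp
    ultimately show ?thesis by (simp add: algebra_simps)
  qed
qed

lemma packing:
  fixes X :: "real set"
  assumes fin: "finite X" and sub: "\<forall>x\<in>X. -(pi/2) \<le> x \<and> x \<le> pi/2"
    and sep: "\<forall>x\<in>X. \<forall>y\<in>X. x \<noteq> y \<longrightarrow> d \<le> \<bar>x - y\<bar>" and d0: "0 \<le> d"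
  shows "(\<Sum>x\<in>X. cos x) \<le> (\<Sum>j<card X. cos ((2*real j - real (card X) + 1) * d / 2))"
proof -
  obtain xs where s: "sorted_wrt (<) xs" and sx: "set xs = X"
    using ex1_sorted_list_for_set_if_finite[OF fin] by blast
  have dist: "distinct xs" using s by (simp add: strict_sorted_iff)
  define k where "k = card X"
  have lk: "length xs = k" unfolding k_def using dist sx distinct_card by metis
  define a where "a j = (2*real j - real k + 1) * d / 2" for j
  have sep': "\<forall>x\<in>set xs. \<forall>y\<in>set xs. x \<noteq> y \<longrightarrow> d \<le> \<bar>x - y\<bar>" using sep sx by simp
  have "(\<Sum>x\<in>X. cos x) = sum_list (map cos xs)"
    using sx dist by (metis sum.distinct_set_conv_list)
  also have "\<dots> = (\<Sum>j<k. cos (xs!j))"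
    by (simp add: sum_list_sum_nth lk atLeast0LessThan)
  finally have e1: "(\<Sum>x\<in>X. cos x) = (\<Sum>j<k. cos (xs!j))" .
  have tm: "cos (xs!j) + cos (xs!(k - Suc j)) \<le> cos (a j) + cos (a (k - Suc j))" if "j < k" for j
  proof -
    define j' where "j' = k - Suc j"
    have j'k: "j' < k" using that unfolding j'_def by simp
    have aj: "a j' = - a j" unfolding a_def j'_def using that by (simp add: of_nat_diff field_simps)
    have dist': "\<bar>real j - real j'\<bar> * d \<le> \<bar>xs!j - xs!j'\<bar>"
    proof (cases "j \<le> j'")
      case True
      have "(real j' - real j) * d \<le> xs!j' - xs!j" using gap[OF s sep' True] j'k lk by simp
      then show ?thesis using True by (simp add: abs_if algebra_simps split: if_splits)
    next
      case False
      have "(real j - real j') * d \<le> xs!j - xs!j'" using gap[OF s sep', of j' j] False that lk by simp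
      then show ?thesis using False by (simp add: abs_if algebra_simps split: if_splits)
    qed
    have jj: "real j - real j' = 2*real j - real k + 1" unfolding j'_def using that by (simp add: of_nat_diff)
    have "2 * \<bar>a j\<bar> = \<bar>(2*real j - real k + 1) * d\<bar>" unfolding a_def by simp
    then have "2 * \<bar>a j\<bar> = \<bar>real j - real j'\<bar> * \<bar>d\<bar>" by (simp only: jj abs_mult)
    then have "2 * \<bar>a j\<bar> \<le> \<bar>xs!j - xs!j'\<bar>"
      using dist' d0 by simp
    then have "cos (xs!j) + cos (xs!j') \<le> 2 * cos (a j)"
      using sub sx that j'k lk by (intro pair_bound) (auto simp: nth_mem)
    then show ?thesis using aj unfolding j'_def by simp
  qed
  have "2 * (\<Sum>j<k. cos (xs!j)) = (\<Sum>j<k. cos (xs!j)) + (\<Sum>j<k. cos (xs!(k - Suc j)))"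
    using sum.nat_diff_reindex[of "\<lambda>j. cos (xs!j)" k] by simp
  also have "\<dots> = (\<Sum>j<k. cos (xs!j) + cos (xs!(k - Suc j)))" by (simp add: sum.distrib)
  also have "\<dots> \<le> (\<Sum>j<k. cos (a j) + cos (a (k - Suc j)))" using tm by (intro sum_mono) auto
  also have "\<dots> = 2 * (\<Sum>j<k. cos (a j))" using sum.nat_diff_reindex[of "\<lambda>j. cos (a j)" k] by (simp add: sum.distrib)
  finally show ?thesis using e1 unfolding a_def k_def by simp
qed


lemma telesc:
  fixes d :: real
  assumes "sin (d/2) \<noteq> 0"
  shows "(\<Sum>j<k. cos ((2*real j - real k + 1) * d / 2)) = sin (real k * d / 2) / sin (d/2)"
proof -
  define F where "F j = sin ((2*real j - real k) * d / 2)" for j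
  have st: "2 * sin (d/2) * cos ((2*real j - real k + 1) * d / 2) = F (Suc j) - F j" for j
  proof -
    define A where "A = (2*real j - real k + 1) * d / 2"
    define B where "B = d / 2"
    have e1: "F (Suc j) = sin (A + B)" unfolding F_def A_def B_def by (rule arg_cong[where f=sin]) (simp add: field_simps)
    have e2: "F j = sin (A - B)" unfolding F_def A_def B_def by (rule arg_cong[where f=sin]) (simp add: field_simps)
    show ?thesis unfolding e1 e2 sin_add sin_diff by (simp add: A_def B_def algebra_simps)
  qed
  have "2 * sin (d/2) * (\<Sum>j<k. cos ((2*real j - real k + 1) * d / 2)) = (\<Sum>j<k. F (Suc j) - F j)"
    by (simp add: sum_distrib_left st)
  also have "\<dots> = F k - F 0" by (rule sum_lessThan_telescope)
  also have "\<dots> = 2 * sin (real k * d / 2)" unfolding F_def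
  proof -
    have "(2 * real k - real k) * d / 2 = real k * d / 2" "(2 * real 0 - real k) * d / 2 = - (real k * d / 2)"
      by (simp_all add: field_simps)
    then show "sin ((2 * real k - real k) * d / 2) - sin ((2 * real 0 - real k) * d / 2) = 2 * sin (real k * d / 2)"
      by simp
  qed
  finally show ?thesis using assms by (simp add: field_simps)
qed

lemma abs_cos_shift: "\<bar>cos (t - pi * of_int J)\<bar> = \<bar>cos t\<bar>"
proof -
  have s: "sin (of_int J * pi) = 0" using sin_zero_iff_int2 by blast
  then have c: "\<bar>cos (of_int J * pi)\<bar> = 1" by (rule sin_zero_abs_cos_one)
  have "cos (t - pi * of_int J) = cos t * cos (of_int J * pi)" by (simp add: cos_diff s mult.commute)
  then show ?thesis using c by (simp add: abs_mult)
qed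

lemma comb_bound:
  assumes n: "n \<ge> 1" and S: "S \<subseteq> {..<n}"
  shows "(\<Sum>y\<in>S. \<bar>cos (theta n y - \<psi>)\<bar>) \<le> sin (real (card S) * (pi / real n) / 2) / sin ((pi / real n) / 2)"
proof -
  define d where "d = pi / real n"
  have d0: "d > 0" unfolding d_def using n by simp
  define J where "J y = \<lceil>(theta n y - \<psi> - pi/2)/pi\<rceil>" for y
  define u where "u y = theta n y - \<psi> - pi * of_int (J y)" for y
  have urange: "-(pi/2) < u y \<and> u y \<le> pi/2" for y
  proof -
    have "of_int (J y) \<ge> (theta n y - \<psi> - pi/2)/pi" "of_int (J y) < (theta n y - \<psi> - pi/2)/pi + 1"
      unfolding J_def by linarith+
    then have "pi * of_int (J y) \<ge> theta n y - \<psi> - pi/2" "pi * of_int (J y) < theta n y - \<psi> - pi/2 + pi"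
      by (simp_all add: field_simps)
    then show ?thesis unfolding u_def by linarith
  qed
  have ucos: "\<bar>cos (theta n y - \<psi>)\<bar> = cos (u y)" for y
  proof -
    have "cos (u y) \<ge> 0" using urange[of y] by (intro cos_ge_zero) auto
    then show ?thesis using abs_cos_shift[of "theta n y - \<psi>" "J y"] unfolding u_def by simp
  qed
  have usep: "d \<le> \<bar>u y - u y'\<bar>" if "y \<in> S" "y' \<in> S" "y \<noteq> y'" for y y'
  proof -
    define N where "N = int y - int y' - int n * (J y - J y')"
    have yn: "y < n" "y' < n" using that S by auto
    have N0: "N \<noteq> 0"
    proof
      assume "N = 0"
      then have e: "int y - int y' = int n * (J y - J y')" unfolding N_def by simp
      have "\<bar>int y - int y'\<bar> < int n" using yn by auto
      then have "\<bar>int n * (J y - J y')\<bar> < int n" using e by simp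
      then have "J y - J y' = 0"
      proof (rule contrapos_pp)
        assume K: "J y - J y' \<noteq> 0"
        then have "\<bar>J y - J y'\<bar> \<ge> 1" by linarith
        then have "int n * 1 \<le> int n * \<bar>J y - J y'\<bar>" by (intro mult_left_mono) auto
        then show "\<not> \<bar>int n * (J y - J y')\<bar> < int n" by (simp add: abs_mult)
      qed
      then show False using e that by simp
    qed
    have "u y - u y' = d * of_int N"
      unfolding u_def N_def d_def theta_def using n by (simp add: field_simps)
    then have "\<bar>u y - u y'\<bar> = d * \<bar>of_int N\<bar>" using d0 by (simp add: abs_mult)
    moreover have "\<bar>(of_int N :: real)\<bar> \<ge> 1" using N0 by linarith
    ultimately show ?thesis using d0 mult_left_mono[of 1 "\<bar>of_int N\<bar>" d] by simp
  qed
  have inj: "inj_on u S" using usep d0 unfolding inj_on_def by force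
  have fin: "finite S" using S finite_subset by blast
  have "(\<Sum>y\<in>S. \<bar>cos (theta n y - \<psi>)\<bar>) = (\<Sum>y\<in>S. cos (u y))" by (simp add: ucos)
  also have "\<dots> = (\<Sum>x\<in>u ` S. cos x)" using sum.reindex[OF inj, of cos] by simp
  also have "\<dots> \<le> (\<Sum>j<card (u ` S). cos ((2*real j - real (card (u ` S)) + 1) * d / 2))"
  proof (rule packing)
    show "finite (u ` S)" using fin by simp
    show "\<forall>x\<in>u ` S. - (pi / 2) \<le> x \<and> x \<le> pi / 2" using urange by (auto simp: less_imp_le)
    show "\<forall>x\<in>u ` S. \<forall>y\<in>u ` S. x \<noteq> y \<longrightarrow> d \<le> \<bar>x - y\<bar>" using usep by auto
    show "0 \<le> d" using d0 by simp
  qed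
  also have "card (u ` S) = card S" using card_image[OF inj] .
  also have "(\<Sum>j<card S. cos ((2*real j - real (card S) + 1) * d / 2)) = sin (real (card S) * d / 2) / sin (d/2)"
  proof (rule telesc)
    have "0 < d/2" "d/2 < pi" using d0 n unfolding d_def by (auto simp: field_simps)
    then show "sin (d/2) \<noteq> 0" using sin_gt_zero by (metis less_irrefl)
  qed
  finally show ?thesis unfolding d_def .
qed

lemma sum2: "sum f (UNIV::2 set) = f 0 + f 1"
proof -
  have h: "(UNIV::2 set) = {0,1}" using exhaust_2 by (metis UNIV_2 add_0 one_add_one insert_commute)
  have h01: "(0::2) \<noteq> 1" by simp
  have "sum f (UNIV::2 set) = sum f {0,1}" by (simp only: h)
  also have "\<dots> = f 0 + f 1" using h01 by (simp add: sum.insert)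
  finally show ?thesis .
qed

lemma ofreal_vec: "((of_real r)::complex^2) $ i = of_real r"
  by (simp add: of_real_def scaleR_vec_def)

lemma tr_lin: "tr2 ((of_real c *s pauliZ + of_real s *s pauliX) ** A) = of_real c * (A$0$0 - A$1$1) + of_real s * (A$0$1 + A$1$0)"
  unfolding tr2_def pauliZ_def pauliX_def
  by (simp add: sum2 matrix_matrix_mult_def algebra_simps vector_scalar_mult_def ofreal_vec)

lemma tr2_alt: "tr2 A = A$0$0 + A$1$1" unfolding tr2_def by (simp add: sum2)


definition Ef :: "nat \<Rightarrow> nat \<Rightarrow> cmat2 \<Rightarrow> real" where
  "Ef n y A = cos (theta n y) * (Re (A$0$0) - Re (A$1$1)) + sin (theta n y) * (Re (A$0$1) + Re (A$1$0))"

definition Tr :: "cmat2 \<Rightarrow> real" where "Tr A = Re (A$0$0) + Re (A$1$1)"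

lemma sum_entry: "(\<Sum>l\<in>L. f l :: cmat2) $ i $ j = (\<Sum>l\<in>L. f l $ i $ j)"
  by (simp add: sum_component)

lemma rep:
  assumes "\<forall>b. \<forall>y<n. rho b y = (\<Sum>l<m. p b y l *\<^sub>R rl l)"
  shows "T_n n rho = (1/real n) * (\<Sum>y<n. \<Sum>l<m. (p B0 y l + p B1 y l) * Tr (rl l))"
    and "W_n n rho = (1/real n) * (\<Sum>y<n. \<Sum>l<m. (p B0 y l - p B1 y l) * Ef n y (rl l))"
proof -
  have r: "rho b y $ i $ j = (\<Sum>l<m. of_real (p b y l) * rl l $ i $ j)" if "y < n" for b y i j
    using assms that by (simp add: sum_entry vector_scaleR_component) (simp add: scaleR_conv_of_real)
  have "T_n n rho = (1/real n) * (\<Sum>y<n. Re (tr2 (rho B0 y + rho B1 y)))"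
    unfolding T_n_def by (simp add: Re_divide_of_real flip: Re_sum) 
  also have "\<dots> = (1/real n) * (\<Sum>y<n. \<Sum>l<m. (p B0 y l + p B1 y l) * Tr (rl l))"
    by (intro arg_cong[where f="\<lambda>x. (1/real n) * x"] sum.cong refl)
       (simp add: tr2_alt r Re_sum Tr_def sum.distrib[symmetric] algebra_simps sum_distrib_left)
  finally show "T_n n rho = (1/real n) * (\<Sum>y<n. \<Sum>l<m. (p B0 y l + p B1 y l) * Tr (rl l))" .
  have "W_n n rho = (1/real n) * (\<Sum>y<n. Re (tr2 ((of_real (cos (theta n y)) *s pauliZ + of_real (sin (theta n y)) *s pauliX) ** (rho B0 y - rho B1 y))))"
    unfolding W_n_def by (simp add: Re_divide_of_real flip: Re_sum)
  also have "\<dots> = (1/real n) * (\<Sum>y<n. \<Sum>l<m. (p B0 y l - p B1 y l) * Ef n y (rl l))"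
    by (intro arg_cong[where f="\<lambda>x. (1/real n) * x"] sum.cong refl)
       (simp add: tr_lin r Re_sum Ef_def sum_subtractf[symmetric] sum.distrib[symmetric] algebra_simps sum_distrib_left)
  finally show "W_n n rho = (1/real n) * (\<Sum>y<n. \<Sum>l<m. (p B0 y l - p B1 y l) * Ef n y (rl l))" .
qed


lemma sum_split_add: "(\<Sum>l<m1+(m2::nat). (f l::'a::comm_monoid_add)) = (\<Sum>l<m1. f l) + (\<Sum>l<m2. f (m1 + l))"
  by (induction m2) (simp_all add: add.assoc)

lemma vec2_entry: "(\<chi> i::2. if i = 0 then x else y) $ 0 = x" "(\<chi> i::2. if i = 0 then x else y) $ 1 = y"
  by simp_all

lemma psd_qf:
  assumes "psd2 A"
  shows "0 \<le> Re (A$0$0) * x^2 + (Re (A$0$1) + Re (A$1$0)) * x * y + Re (A$1$1) * y^2"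
proof -
  define v :: "complex^2" where "v = (\<chi> i. if i = 0 then of_real x else of_real y)"
  have "0 \<le> Re (\<Sum>i\<in>UNIV. \<Sum>j\<in>UNIV. cnj (v$i) * A$i$j * v$j)" using assms unfolding psd2_def by blast
  also have "Re (\<Sum>i\<in>UNIV. \<Sum>j\<in>UNIV. cnj (v$i) * A$i$j * v$j) =
     Re (A$0$0) * x^2 + (Re (A$0$1) + Re (A$1$0)) * x * y + Re (A$1$1) * y^2"
    unfolding v_def by (simp add: sum2 power2_eq_square algebra_simps)
  finally show ?thesis .
qed

lemma psd_bloch:
  assumes "psd2 A"
  shows "Tr A \<ge> 0" "(Re (A$0$0) - Re (A$1$1))^2 + (Re (A$0$1) + Re (A$1$0))^2 \<le> (Tr A)^2"
proof -
  define a where "a = Re (A$0$0)"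
  define d where "d = Re (A$1$1)"
  define B where "B = Re (A$0$1) + Re (A$1$0)"
  have q: "0 \<le> a * x^2 + B * x * y + d * y^2" for x y
    using psd_qf[OF assms] unfolding a_def d_def B_def by blast
  have a0: "a \<ge> 0" using q[of 1 0] by simp
  have d0: "d \<ge> 0" using q[of 0 1] by simp
  show "Tr A \<ge> 0" using a0 d0 unfolding Tr_def a_def d_def by simp
  have key: "B^2 \<le> 4*a*d"
  proof (cases "a + d = 0")
    case True
    then have "a = 0" "d = 0" using a0 d0 by auto
    then have "0 \<le> - (B^2)" using q[of 1 "-B"] by (simp add: power2_eq_square)
    then show ?thesis using \<open>a = 0\<close> by simp
  next
    case False
    have 1: "0 \<le> a * (4*a*d - B^2)" using q[of "-B" "2*a"] by (simp add: power2_eq_square algebra_simps)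
    have 2: "0 \<le> d * (4*a*d - B^2)" using q[of "2*d" "-B"] by (simp add: power2_eq_square algebra_simps)
    have "0 \<le> (a + d) * (4*a*d - B^2)" using 1 2 by (simp add: algebra_simps)
    moreover have "a + d > 0" using False a0 d0 by simp
    ultimately show ?thesis by (simp add: zero_le_mult_iff)
  qed
  show "(Re (A$0$0) - Re (A$1$1))^2 + (Re (A$0$1) + Re (A$1$0))^2 \<le> (Tr A)^2"
    using key unfolding Tr_def a_def[symmetric] d_def[symmetric] B_def[symmetric]
    by (simp add: power2_eq_square algebra_simps)
qed

lemma Ef_bound:
  assumes "psd2 A"
  shows "\<exists>\<psi>. \<forall>y. \<bar>Ef n y A\<bar> \<le> Tr A * \<bar>cos (theta n y - \<psi>)\<bar>"
proof -
  define u where "u = Re (A$0$0) - Re (A$1$1)"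
  define w where "w = Re (A$0$1) + Re (A$1$0)"
  define z where "z = Complex u w"
  define R where "R = cmod z"
  define t where "t = Arg z"
  have zr: "rcis R t = z" unfolding R_def t_def by (rule rcis_cmod_Arg)
  have uu: "u = R * cos t" using arg_cong[OF zr, of Re] unfolding z_def by simp
  have ww: "w = R * sin t" using arg_cong[OF zr, of Im] unfolding z_def by (simp add: rcis_def cis.sel)
  have R0: "R \<ge> 0" unfolding R_def by simp
  have "R^2 = u^2 + w^2" unfolding R_def z_def complex_norm by simp
  then have "R^2 \<le> (Tr A)^2" using psd_bloch[OF assms] unfolding u_def w_def by simp
  then have RT: "R \<le> Tr A" using psd_bloch(1)[OF assms] R0 by (simp add: power2_le_iff_abs_le)
  have "\<bar>Ef n y A\<bar> \<le> Tr A * \<bar>cos (theta n y - t)\<bar>" for y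
  proof -
    have "Ef n y A = R * cos (theta n y - t)"
      unfolding Ef_def u_def[symmetric] w_def[symmetric] uu ww cos_diff by (simp add: algebra_simps)
    then have "\<bar>Ef n y A\<bar> = R * \<bar>cos (theta n y - t)\<bar>" using R0 by (simp add: abs_mult)
    also have "\<dots> \<le> Tr A * \<bar>cos (theta n y - t)\<bar>" using RT by (intro mult_right_mono) auto
    finally show ?thesis .
  qed
  then show ?thesis by blast
qed


definition valid :: "nat \<Rightarrow> nat \<Rightarrow> (nat \<Rightarrow> cmat2) \<Rightarrow> (outcome \<Rightarrow> nat \<Rightarrow> nat \<Rightarrow> real) \<Rightarrow> bool" where
 "valid n m rl p \<longleftrightarrow> (\<forall>l<m. psd2 (rl l)) \<and> (\<Sum>l<m. tr2 (rl l)) = 1 \<and>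
     (\<forall>y<n. \<forall>l<m. (\<forall>b. p b y l \<ge> 0) \<and> p B0 y l + p B1 y l + p BNone y l = 1)"

definition Tv :: "nat \<Rightarrow> nat \<Rightarrow> (nat \<Rightarrow> cmat2) \<Rightarrow> (outcome \<Rightarrow> nat \<Rightarrow> nat \<Rightarrow> real) \<Rightarrow> real" where
 "Tv n m rl p = (1/real n) * (\<Sum>y<n. \<Sum>l<m. (p B0 y l + p B1 y l) * Tr (rl l))"

definition Wv :: "nat \<Rightarrow> nat \<Rightarrow> (nat \<Rightarrow> cmat2) \<Rightarrow> (outcome \<Rightarrow> nat \<Rightarrow> nat \<Rightarrow> real) \<Rightarrow> real" where
 "Wv n m rl p = (1/real n) * (\<Sum>y<n. \<Sum>l<m. (p B0 y l - p B1 y l) * Ef n y (rl l))"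

lemma att_iff: "z \<in> attainable n \<longleftrightarrow> (\<exists>m rl p. valid n m rl p \<and> z = (Tv n m rl p, Wv n m rl p))"
proof
  assume "z \<in> attainable n"
  then obtain rho where z: "z = (T_n n rho, W_n n rho)" and L: "LHS_assemblage n rho"
    unfolding attainable_def by blast
  then obtain m rl p where v: "valid n m rl p" and r: "\<forall>b. \<forall>y<n. rho b y = (\<Sum>l<m. p b y l *\<^sub>R rl l)"
    unfolding LHS_assemblage_def valid_def by blast
  show "\<exists>m rl p. valid n m rl p \<and> z = (Tv n m rl p, Wv n m rl p)"
    using v rep[OF r] z unfolding Tv_def Wv_def by blast
next
  assume "\<exists>m rl p. valid n m rl p \<and> z = (Tv n m rl p, Wv n m rl p)"
  then obtain m rl p where v: "valid n m rl p" and z: "z = (Tv n m rl p, Wv n m rl p)" by blast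
  define rho where "rho b y = (\<Sum>l<m. p b y l *\<^sub>R rl l)" for b y
  have r: "\<forall>b. \<forall>y<n. rho b y = (\<Sum>l<m. p b y l *\<^sub>R rl l)" unfolding rho_def by simp
  have "LHS_assemblage n rho" unfolding LHS_assemblage_def using v r unfolding valid_def by blast
  moreover have "z = (T_n n rho, W_n n rho)" using z rep[OF r] unfolding Tv_def Wv_def by simp
  ultimately show "z \<in> attainable n" unfolding attainable_def by blast
qed

lemma Tr_scale: "Tr (c *\<^sub>R A) = c * Tr A" unfolding Tr_def by (simp add: vector_scaleR_component algebra_simps)
lemma Ef_scale: "Ef n y (c *\<^sub>R A) = c * Ef n y A" unfolding Ef_def by (simp add: vector_scaleR_component algebra_simps)
lemma tr2_scale: "tr2 (c *\<^sub>R A) = of_real c * tr2 A" unfolding tr2_alt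
  by (simp only: vector_scaleR_component) (simp add: scaleR_conv_of_real algebra_simps)

lemma psd_scale: assumes "c \<ge> 0" "psd2 A" shows "psd2 (c *\<^sub>R A)"
  unfolding psd2_def
proof
  fix v :: "complex^2"
  have e: "(\<Sum>i\<in>UNIV. \<Sum>j\<in>UNIV. cnj (v$i) * (c *\<^sub>R A)$i$j * v$j) = of_real c * (\<Sum>i\<in>UNIV. \<Sum>j\<in>UNIV. cnj (v$i) * A$i$j * v$j)"
    by (simp only: vector_scaleR_component) (simp add: scaleR_conv_of_real sum_distrib_left algebra_simps)
  show "Im (\<Sum>i\<in>UNIV. \<Sum>j\<in>UNIV. cnj (v$i) * (c *\<^sub>R A)$i$j * v$j) = 0 \<and>
        0 \<le> Re (\<Sum>i\<in>UNIV. \<Sum>j\<in>UNIV. cnj (v$i) * (c *\<^sub>R A)$i$j * v$j)"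
    unfolding e using assms unfolding psd2_def by simp
qed

lemma att_convex: "convex (attainable n)"
  unfolding convex_def
proof (intro ballI allI impI)
  fix x y and u v :: real
  assume x: "x \<in> attainable n" and y: "y \<in> attainable n" and u: "0 \<le> u" and v: "0 \<le> v" and uv: "u + v = 1"
  obtain m1 rl1 p1 where v1: "valid n m1 rl1 p1" and x1: "x = (Tv n m1 rl1 p1, Wv n m1 rl1 p1)" using x att_iff by blast
  obtain m2 rl2 p2 where v2: "valid n m2 rl2 p2" and y2: "y = (Tv n m2 rl2 p2, Wv n m2 rl2 p2)" using y att_iff by blast
  define rl where "rl l = (if l < m1 then u *\<^sub>R rl1 l else v *\<^sub>R rl2 (l - m1))" for l
  define p where "p b yy l = (if l < m1 then p1 b yy l else p2 b yy (l - m1))" for b yy l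
  have val: "valid n (m1 + m2) rl p"
    unfolding valid_def
  proof (intro conjI allI impI)
    fix l assume "l < m1 + m2"
    then show "psd2 (rl l)" using v1 v2 u v unfolding valid_def rl_def by (auto intro!: psd_scale)
  next
    show "(\<Sum>l<m1 + m2. tr2 (rl l)) = 1"
      unfolding sum_split_add rl_def using v1 v2 uv
      by (simp add: tr2_scale valid_def flip: sum_distrib_left of_real_add)
  next
    fix yy l b assume "yy < n" "l < m1 + m2"
    then show "0 \<le> p b yy l" using v1 v2 unfolding valid_def p_def by auto
  next
    fix yy l assume "yy < n" "l < m1 + m2"
    then show "p B0 yy l + p B1 yy l + p BNone yy l = 1" using v1 v2 unfolding valid_def p_def by auto
  qed
  have "Tv n (m1 + m2) rl p = u * Tv n m1 rl1 p1 + v * Tv n m2 rl2 p2"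
    unfolding Tv_def sum_split_add rl_def p_def
    by (simp add: Tr_scale sum.distrib sum_distrib_left algebra_simps)
  moreover have "Wv n (m1 + m2) rl p = u * Wv n m1 rl1 p1 + v * Wv n m2 rl2 p2"
    unfolding Wv_def sum_split_add rl_def p_def
    by (simp add: Ef_scale sum.distrib sum_distrib_left algebra_simps)
  ultimately have "u *\<^sub>R x + v *\<^sub>R y = (Tv n (m1 + m2) rl p, Wv n (m1 + m2) rl p)"
    using x1 y2 by simp
  then show "u *\<^sub>R x + v *\<^sub>R y \<in> attainable n" using val att_iff by blast
qed


definition phi :: "real \<Rightarrow> 2 \<Rightarrow> real" where "phi \<psi> i = (if i = 0 then cos (\<psi>/2) else sin (\<psi>/2))"
definition pure :: "real \<Rightarrow> cmat2" where "pure \<psi> = (\<chi> i j. of_real (phi \<psi> i * phi \<psi> j))"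

lemma pure_psd: "psd2 (pure \<psi>)"
  unfolding psd2_def
proof
  fix v :: "complex^2"
  define w where "w = (\<Sum>j\<in>UNIV. of_real (phi \<psi> j) * v$j)"
  have e: "(\<Sum>i\<in>UNIV. \<Sum>j\<in>UNIV. cnj (v$i) * pure \<psi> $i$j * v$j) = cnj w * w"
    unfolding w_def pure_def by (simp add: sum2 algebra_simps)
  have "cnj w * w = of_real ((cmod w)^2)" using complex_norm_square[of w] by (simp add: mult.commute)
  then show "Im (\<Sum>i\<in>UNIV. \<Sum>j\<in>UNIV. cnj (v$i) * pure \<psi> $i$j * v$j) = 0 \<and>
        0 \<le> Re (\<Sum>i\<in>UNIV. \<Sum>j\<in>UNIV. cnj (v$i) * pure \<psi> $i$j * v$j)" unfolding e by simp
qed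

lemma pure_tr: "tr2 (pure \<psi>) = 1" "Tr (pure \<psi>) = 1"
proof -
  have "cos (\<psi>/2)^2 + sin (\<psi>/2)^2 = 1" by simp
  then show "tr2 (pure \<psi>) = 1" "Tr (pure \<psi>) = 1" unfolding tr2_alt Tr_def pure_def phi_def
    by (simp_all add: power2_eq_square flip: of_real_mult of_real_add)
qed

lemma pure_Ef: "Ef n y (pure \<psi>) = cos (theta n y - \<psi>)"
proof -
  have c: "cos (\<psi>/2) * cos (\<psi>/2) - sin (\<psi>/2) * sin (\<psi>/2) = cos \<psi>"
    using cos_double[of "\<psi>/2"] by (simp add: power2_eq_square)
  have s: "sin (\<psi>/2) * cos (\<psi>/2) + cos (\<psi>/2) * sin (\<psi>/2) = sin \<psi>"
    using sin_double[of "\<psi>/2"] by simp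
  show ?thesis unfolding Ef_def pure_def phi_def using c s by (simp add: cos_diff)
qed

lemma vertex_att:
  assumes n: "n \<ge> 1" and k: "k \<le> n" and s: "s \<in> {-1, 1::real}"
  shows "(real k / real n, s * sin (pi / 2 * (real k / real n)) / (real n * sin (pi / (2 * real n)))) \<in> attainable n"
proof -
  define \<psi> where "\<psi> = (real k - 1) * pi / (2 * real n)"
  define bs where "bs = (if s = 1 then B0 else B1)"
  define p where "p b y (l::nat) = (if y < k then (if b = bs then 1 else 0) else (if b = BNone then 1 else 0::real))" for b y l
  define rl where "rl (l::nat) = pure \<psi>" for l
  have val: "valid n 1 rl p" unfolding valid_def rl_def p_def bs_def
    using pure_psd pure_tr by auto
  have nk: "n = k + (n - k)" using k by simp
  have sumk: "(\<Sum>y<n. f y) = (\<Sum>y<k. f y) + (\<Sum>l<n-k. f (k + l))" for f :: "nat \<Rightarrow> real"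
    by (subst nk) (rule sum_split_add)
  have "Tv n 1 rl p = (1/real n) * (\<Sum>y<n. (p B0 y 0 + p B1 y 0))"
    unfolding Tv_def rl_def by (simp add: pure_tr)
  also have "\<dots> = real k / real n" unfolding sumk p_def bs_def by simp
  finally have T: "Tv n 1 rl p = real k / real n" .
  have "Wv n 1 rl p = (1/real n) * (\<Sum>y<n. (p B0 y 0 - p B1 y 0) * cos (theta n y - \<psi>))"
    unfolding Wv_def rl_def by (simp add: pure_Ef)
  also have "\<dots> = (1/real n) * (s * (\<Sum>y<k. cos (theta n y - \<psi>)))"
    unfolding sumk p_def bs_def using s by (auto simp: sum_distrib_left)
  also have "(\<Sum>y<k. cos (theta n y - \<psi>)) = (\<Sum>j<k. cos ((2*real j - real k + 1) * (pi / real n) / 2))"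
    unfolding theta_def \<psi>_def using n by (intro sum.cong refl arg_cong[where f=cos]) (simp add: field_simps)
  also have "\<dots> = sin (real k * (pi / real n) / 2) / sin ((pi / real n) / 2)"
  proof (rule telesc)
    have "0 < (pi / real n)/2" "(pi / real n)/2 < pi" using n by (auto simp: field_simps)
    then show "sin ((pi / real n)/2) \<noteq> 0" using sin_gt_zero by (metis less_irrefl)
  qed
  also have "real k * (pi / real n) / 2 = pi / 2 * (real k / real n)" by (simp add: field_simps)
  also have "(pi / real n) / 2 = pi / (2 * real n)" by simp
  finally have W: "Wv n 1 rl p = s * sin (pi / 2 * (real k / real n)) / (real n * sin (pi / (2 * real n)))"
    by simp
  show ?thesis using att_iff val T W by metis
qed


definition gv :: "nat \<Rightarrow> nat \<Rightarrow> real" where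
  "gv n k = sin (pi / 2 * (real k / real n)) / (real n * sin (pi / (2 * real n)))"

lemma PV_eq: "polygon_vertices n = (\<lambda>(k,s). (real k / real n, s * gv n k)) ` ({..n} \<times> {-1,1})"
  unfolding polygon_vertices_def gv_def by (auto simp: image_iff)

lemma PV_finite: "finite (polygon_vertices n)" unfolding PV_eq by simp

lemma PV_mem: "k \<le> n \<Longrightarrow> s \<in> {-1,1} \<Longrightarrow> (real k / real n, s * gv n k) \<in> polygon_vertices n"
  unfolding PV_eq by force

lemma term_bound:
  fixes p0 p1 t E c \<alpha> \<beta> :: real
  assumes "0 \<le> p0" "0 \<le> p1" "p0 + p1 \<le> 1" "0 \<le> t" "\<bar>E\<bar> \<le> t * c"
  shows "\<alpha> * ((p0 + p1) * t) + \<beta> * ((p0 - p1) * E) \<le> t * max 0 (\<alpha> + \<bar>\<beta>\<bar> * c)"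
proof -
  have "\<beta> * ((p0 - p1) * E) \<le> \<bar>\<beta> * ((p0 - p1) * E)\<bar>" by simp
  also have "\<dots> = \<bar>\<beta>\<bar> * (\<bar>p0 - p1\<bar> * \<bar>E\<bar>)" by (simp add: abs_mult)
  also have "\<dots> \<le> \<bar>\<beta>\<bar> * ((p0 + p1) * (t * c))"
    using assms by (intro mult_left_mono mult_mono) auto
  finally have "\<alpha> * ((p0 + p1) * t) + \<beta> * ((p0 - p1) * E) \<le> (p0 + p1) * (t * (\<alpha> + \<bar>\<beta>\<bar> * c))"
    by (simp add: algebra_simps)
  also have "\<dots> \<le> (p0 + p1) * (t * max 0 (\<alpha> + \<bar>\<beta>\<bar> * c))"
    using assms by (intro mult_left_mono) auto
  also have "\<dots> \<le> 1 * (t * max 0 (\<alpha> + \<bar>\<beta>\<bar> * c))"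
    using assms by (intro mult_right_mono) auto
  finally show ?thesis by simp
qed

definition Mx :: "nat \<Rightarrow> real \<Rightarrow> real \<Rightarrow> real" where
  "Mx n \<alpha> \<beta> = Max ((\<lambda>v. \<alpha> * fst v + \<beta> * snd v) ` polygon_vertices n)"

lemma sum_bound:
  assumes n: "n \<ge> 1"
  shows "(\<Sum>y<n. max 0 (\<alpha> + \<bar>\<beta>\<bar> * \<bar>cos (theta n y - \<psi>)\<bar>)) \<le> real n * Mx n \<alpha> \<beta>"
proof -
  define c where "c y = \<bar>cos (theta n y - \<psi>)\<bar>" for y
  define S where "S = {y \<in> {..<n}. 0 < \<alpha> + \<bar>\<beta>\<bar> * c y}"
  define k where "k = card S"
  have Ssub: "S \<subseteq> {..<n}" unfolding S_def by auto
  have kn: "k \<le> n" unfolding k_def using card_mono[OF _ Ssub] by simp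
  have "(\<Sum>y<n. max 0 (\<alpha> + \<bar>\<beta>\<bar> * c y)) = (\<Sum>y\<in>S. \<alpha> + \<bar>\<beta>\<bar> * c y)"
  proof (rule sum.mono_neutral_cong_right)
    show "finite {..<n}" by simp
    show "S \<subseteq> {..<n}" by (rule Ssub)
    show "\<forall>i\<in>{..<n} - S. max 0 (\<alpha> + \<bar>\<beta>\<bar> * c i) = 0" unfolding S_def by auto
    show "\<And>x. x \<in> S \<Longrightarrow> max 0 (\<alpha> + \<bar>\<beta>\<bar> * c x) = \<alpha> + \<bar>\<beta>\<bar> * c x" unfolding S_def by auto
  qed
  also have "\<dots> = \<alpha> * real k + \<bar>\<beta>\<bar> * (\<Sum>y\<in>S. c y)"
    unfolding k_def by (simp add: sum.distrib sum_distrib_left)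
  also have "\<dots> \<le> \<alpha> * real k + \<bar>\<beta>\<bar> * (sin (real k * (pi / real n) / 2) / sin ((pi / real n) / 2))"
    using comb_bound[OF n Ssub, of \<psi>] unfolding c_def k_def by (intro add_left_mono mult_left_mono) auto
  also have "sin (real k * (pi / real n) / 2) / sin ((pi / real n) / 2) = real n * gv n k"
  proof -
    have "sin ((pi / real n) / 2) \<noteq> 0"
    proof -
      have "0 < (pi / real n)/2" "(pi / real n)/2 < pi" using n by (auto simp: field_simps)
      then show ?thesis using sin_gt_zero by (metis less_irrefl)
    qed
    moreover have "real k * (pi / real n) / 2 = pi / 2 * (real k / real n)" by (simp add: field_simps)
    moreover have "(pi / real n) / 2 = pi / (2 * real n)" by simp
    ultimately show ?thesis unfolding gv_def using n by (simp add: field_simps)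
  qed
  also have "\<alpha> * real k + \<bar>\<beta>\<bar> * (real n * gv n k) = real n * (\<alpha> * (real k / real n) + \<beta> * ((if \<beta> \<ge> 0 then 1 else -1) * gv n k))"
    using n by (simp add: field_simps abs_if)
  finally have 1: "(\<Sum>y<n. max 0 (\<alpha> + \<bar>\<beta>\<bar> * c y)) \<le> real n * (\<alpha> * (real k / real n) + \<beta> * ((if \<beta> \<ge> 0 then 1 else -1) * gv n k))" .
  define v where "v = (real k / real n, (if \<beta> \<ge> 0 then 1 else -1) * gv n k)"
  have vV: "v \<in> polygon_vertices n" unfolding v_def using kn by (intro PV_mem) auto
  have "\<alpha> * fst v + \<beta> * snd v \<le> Mx n \<alpha> \<beta>" unfolding Mx_def using vV PV_finite by (intro Max_ge) auto
  then have "real n * (\<alpha> * fst v + \<beta> * snd v) \<le> real n * Mx n \<alpha> \<beta>" by (intro mult_left_mono) auto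
  then show ?thesis using 1 unfolding v_def c_def by simp
qed


lemma Tr_sum: "valid n m rl p \<Longrightarrow> (\<Sum>l<m. Tr (rl l)) = 1"
proof -
  assume v: "valid n m rl p"
  have "(\<Sum>l<m. Tr (rl l)) = Re (\<Sum>l<m. tr2 (rl l))" unfolding Tr_def tr2_alt by (simp add: Re_sum)
  then show ?thesis using v unfolding valid_def by simp
qed

lemma att_le:
  assumes n: "n \<ge> 1" and z: "z \<in> attainable n"
  shows "\<alpha> * fst z + \<beta> * snd z \<le> Mx n \<alpha> \<beta>"
proof -
  obtain m rl p where v: "valid n m rl p" and zz: "z = (Tv n m rl p, Wv n m rl p)" using z att_iff by blast
  have psd: "\<And>l. l < m \<Longrightarrow> psd2 (rl l)" using v unfolding valid_def by blast
  define \<psi> where "\<psi> l = (SOME \<psi>. \<forall>y. \<bar>Ef n y (rl l)\<bar> \<le> Tr (rl l) * \<bar>cos (theta n y - \<psi>)\<bar>)" for l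
  have psi: "\<bar>Ef n y (rl l)\<bar> \<le> Tr (rl l) * \<bar>cos (theta n y - \<psi> l)\<bar>" if "l < m" for l y
    using someI_ex[OF Ef_bound[OF psd[OF that], of n]] unfolding \<psi>_def by blast
  define M where "M = Mx n \<alpha> \<beta>"
  have "\<alpha> * fst z + \<beta> * snd z = (1/real n) * (\<Sum>y<n. \<Sum>l<m. \<alpha> * ((p B0 y l + p B1 y l) * Tr (rl l)) + \<beta> * ((p B0 y l - p B1 y l) * Ef n y (rl l)))"
  proof -
    have "\<alpha> * fst z + \<beta> * snd z = (1/real n) * (\<alpha> * (\<Sum>y<n. \<Sum>l<m. (p B0 y l + p B1 y l) * Tr (rl l)) + \<beta> * (\<Sum>y<n. \<Sum>l<m. (p B0 y l - p B1 y l) * Ef n y (rl l)))"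
      unfolding zz Tv_def Wv_def by (simp add: algebra_simps)
    also have "\<alpha> * (\<Sum>y<n. \<Sum>l<m. (p B0 y l + p B1 y l) * Tr (rl l)) + \<beta> * (\<Sum>y<n. \<Sum>l<m. (p B0 y l - p B1 y l) * Ef n y (rl l))
       = (\<Sum>y<n. \<Sum>l<m. \<alpha> * ((p B0 y l + p B1 y l) * Tr (rl l)) + \<beta> * ((p B0 y l - p B1 y l) * Ef n y (rl l)))"
      by (simp add: sum_distrib_left sum.distrib)
    finally show ?thesis .
  qed
  also have "\<dots> \<le> (1/real n) * (\<Sum>y<n. \<Sum>l<m. Tr (rl l) * max 0 (\<alpha> + \<bar>\<beta>\<bar> * \<bar>cos (theta n y - \<psi> l)\<bar>))"
  proof (intro mult_left_mono sum_mono)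
    fix y l assume y: "y \<in> {..<n}" and l: "l \<in> {..<m}"
    have pv: "0 \<le> p B0 y l" "0 \<le> p B1 y l" "p B0 y l + p B1 y l \<le> 1"
      using v y l unfolding valid_def by (auto, metis add_increasing2 le_add_same_cancel1)
    show "\<alpha> * ((p B0 y l + p B1 y l) * Tr (rl l)) + \<beta> * ((p B0 y l - p B1 y l) * Ef n y (rl l))
          \<le> Tr (rl l) * max 0 (\<alpha> + \<bar>\<beta>\<bar> * \<bar>cos (theta n y - \<psi> l)\<bar>)"
      using l by (intro term_bound pv psd_bloch(1)[OF psd] psi) auto
  qed simp
  also have "\<dots> = (1/real n) * (\<Sum>l<m. Tr (rl l) * (\<Sum>y<n. max 0 (\<alpha> + \<bar>\<beta>\<bar> * \<bar>cos (theta n y - \<psi> l)\<bar>)))"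
    by (simp add: sum_distrib_left sum.swap[of _ "{..<n}"])
  also have "\<dots> \<le> (1/real n) * (\<Sum>l<m. Tr (rl l) * (real n * M))"
  proof (rule mult_left_mono, rule sum_mono)
    fix l assume l: "l \<in> {..<m}"
    show "Tr (rl l) * (\<Sum>y<n. max 0 (\<alpha> + \<bar>\<beta>\<bar> * \<bar>cos (theta n y - \<psi> l)\<bar>)) \<le> Tr (rl l) * (real n * M)"
      using l psd_bloch(1)[OF psd] sum_bound[OF n] unfolding M_def by (intro mult_left_mono) auto
  qed simp
  also have "\<dots> = M * (\<Sum>l<m. Tr (rl l))" using n by (simp add: sum_distrib_left sum_distrib_right algebra_simps)
  also have "\<dots> = M" using Tr_sum[OF v] by simp
  finally show ?thesis unfolding M_def .
qed

lemma att_sub_hull: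
  assumes n: "n \<ge> 1"
  shows "attainable n \<subseteq> convex hull (polygon_vertices n)"
proof
  fix z assume z: "z \<in> attainable n"
  show "z \<in> convex hull (polygon_vertices n)"
  proof (rule ccontr)
    assume nz: "z \<notin> convex hull (polygon_vertices n)"
    have cl: "closed (convex hull (polygon_vertices n))"
      using PV_finite by (intro compact_imp_closed finite_imp_compact_convex_hull)
    obtain a b where ab: "inner a z < b" "\<forall>x\<in>convex hull (polygon_vertices n). inner a x > b"
      using separating_hyperplane_closed_point[OF convex_convex_hull cl nz] by blast
    obtain a1 a2 where a: "a = (a1, a2)" by (cases a)
    define \<alpha> where "\<alpha> = - a1"
    define \<beta> where "\<beta> = - a2"
    have inn: "inner a x = - (\<alpha> * fst x + \<beta> * snd x)" for x
      unfolding a \<alpha>_def \<beta>_def by (cases x) simp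
    have ne: "polygon_vertices n \<noteq> {}" using PV_mem[of 0 n 1] by auto
    have "Mx n \<alpha> \<beta> \<in> (\<lambda>v. \<alpha> * fst v + \<beta> * snd v) ` polygon_vertices n"
      unfolding Mx_def using PV_finite ne by (intro Max_in) auto
    then obtain v where vV: "v \<in> polygon_vertices n" and Mv: "Mx n \<alpha> \<beta> = \<alpha> * fst v + \<beta> * snd v" by auto
    have "inner a v > b" using ab(2) vV hull_subset[of "polygon_vertices n" convex] by auto
    then have "Mx n \<alpha> \<beta> < - b" using Mv inn by simp
    moreover have "\<alpha> * fst z + \<beta> * snd z > - b" using ab(1) inn by simp
    ultimately show False using att_le[OF n z, of \<alpha> \<beta>] by simp
  qed
qed

lemma hull_sub_att:
  assumes n: "n \<ge> 1"
  shows "convex hull (polygon_vertices n) \<subseteq> attainable n"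
proof (rule hull_minimal)
  show "convex (attainable n)" by (rule att_convex)
  show "polygon_vertices n \<subseteq> attainable n"
    unfolding polygon_vertices_def using vertex_att[OF n] by auto
qed


lemma up_chain: "(\<And>i. i < k \<Longrightarrow> f i < f (Suc i)) \<Longrightarrow> j < k \<Longrightarrow> (f j :: real) < f k"
proof (induction k)
  case 0 then show ?case by simp
next
  case (Suc k)
  show ?case
  proof (cases "j = k")
    case True then show ?thesis using Suc by simp
  next
    case False
    then have "f j < f k" using Suc by simp
    then show ?thesis using Suc(2)[of k] by simp
  qed
qed

lemma down_chain: "(\<And>i. k \<le> i \<Longrightarrow> i < n \<Longrightarrow> f (Suc i) < f i) \<Longrightarrow> k < j \<Longrightarrow> j \<le> n \<Longrightarrow> (f j :: real) < f k"
proof (induction j)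
  case 0 then show ?case by simp
next
  case (Suc j)
  show ?case
  proof (cases "j = k")
    case True then show ?thesis using Suc by simp
  next
    case False
    then have "f j < f k" using Suc by simp
    then show ?thesis using Suc(2)[of j] Suc(3,4) by simp
  qed
qed

lemma gv_facts:
  assumes n: "n \<ge> 1"
  shows "gv n 0 = 0"
    and "\<And>j. 1 \<le> j \<Longrightarrow> j \<le> n \<Longrightarrow> gv n j > 0"
    and "\<And>j. j < n \<Longrightarrow> gv n (Suc j) - gv n j > 0"
    and "\<And>i j. i < j \<Longrightarrow> j < n \<Longrightarrow> gv n (Suc j) - gv n j < gv n (Suc i) - gv n i"
proof -
  define x where "x = pi / (2 * real n)"
  have x0: "0 < x" unfolding x_def using n by simp
  have xn: "real n * x = pi / 2" unfolding x_def using n by simp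
  have sx: "sin x > 0" using x0 xn n by (intro sin_gt_zero) (auto simp: x_def field_simps)
  define C where "C = real n * sin x"
  have C0: "C > 0" unfolding C_def using sx n by simp
  have ga: "gv n j = sin (real j * x) / C" for j
    unfolding gv_def C_def x_def by (rule arg_cong2[where f="(/)"], rule arg_cong[where f=sin]) (simp_all add: field_simps)
  show "gv n 0 = 0" unfolding ga by simp
  show "gv n j > 0" if "1 \<le> j" "j \<le> n" for j
  proof -
    have "real j * x \<le> real n * x" using that x0 by (intro mult_right_mono) auto
    then have "real j * x < pi" using xn pi_gt_zero by linarith
    moreover have "0 < real j * x" using that x0 by simp
    ultimately show ?thesis unfolding ga using C0 sin_gt_zero by simp
  qed
  have D: "gv n (Suc j) - gv n j = 2 * cos ((2 * real j + 1) * x / 2) * sin (x/2) / C" for j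
  proof -
    define A where "A = (2 * real j + 1) * x / 2"
    have e1: "sin (real (Suc j) * x) = sin (A + x/2)" by (rule arg_cong[where f=sin]) (simp add: A_def field_simps)
    have e2: "sin (real j * x) = sin (A - x/2)" by (rule arg_cong[where f=sin]) (simp add: A_def field_simps)
    have "gv n (Suc j) - gv n j = (sin (A + x/2) - sin (A - x/2)) / C" unfolding ga e1 e2 by (simp add: diff_divide_distrib)
    also have "sin (A + x/2) - sin (A - x/2) = 2 * cos A * sin (x/2)" by (simp add: sin_add sin_diff)
    finally show ?thesis unfolding A_def .
  qed
  have sx2: "sin (x/2) > 0" using x0 xn n sx by (intro sin_gt_zero) (auto simp: x_def field_simps)
  have bound: "(2 * real j + 1) * x / 2 < pi/2" if "j < n" for j
  proof -
    have "(2 * real j + 1) * x / 2 \<le> (2 * real n - 1) * x / 2" using that x0 by (intro divide_right_mono mult_right_mono) auto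
    also have "\<dots> < real n * x" using x0 by (simp add: field_simps)
    finally show ?thesis using xn by simp
  qed
  show "gv n (Suc j) - gv n j > 0" if "j < n" for j
  proof -
    have "0 \<le> (2 * real j + 1) * x / 2" using x0 by simp
    then have "cos ((2 * real j + 1) * x / 2) > 0" using bound[OF that] pi_gt_zero by (intro cos_gt_zero_pi) linarith+
    then show ?thesis unfolding D using sx2 C0 by simp
  qed
  show "gv n (Suc j) - gv n j < gv n (Suc i) - gv n i" if "i < j" "j < n" for i j
  proof -
    have b1: "(2 * real j + 1) * x / 2 \<le> pi" using bound[OF that(2)] pi_gt_zero by linarith
    have b2: "(2 * real i + 1) * x / 2 < (2 * real j + 1) * x / 2" using that x0 by (simp add: field_simps)
    have b3: "0 \<le> (2 * real i + 1) * x / 2" using x0 by simp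
    have "cos ((2 * real j + 1) * x / 2) < cos ((2 * real i + 1) * x / 2)"
      using cos_monotone_0_pi[OF b3 b2 b1] .
    then show ?thesis unfolding D using sx2 C0 by (simp add: divide_strict_right_mono)
  qed
qed

lemma avg_lemma1: "(a::real) \<le> d \<Longrightarrow> b < a \<Longrightarrow> c = - (a + b) / 2 \<Longrightarrow> 0 < c + d" by auto
lemma avg_lemma2: "(d::real) \<le> b \<Longrightarrow> b < a \<Longrightarrow> c = - (a + b) / 2 \<Longrightarrow> c + d < 0" by auto

lemma strict_max:
  assumes n: "n \<ge> 1" and k: "1 \<le> k" "k \<le> n"
  shows "\<exists>c. \<forall>j\<le>n. j \<noteq> k \<longrightarrow> c * real j + gv n j < c * real k + gv n k"
proof -
  define D where "D j = gv n (Suc j) - gv n j" for j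
  have Dpos: "\<And>j. j < n \<Longrightarrow> D j > 0" using gv_facts(3)[OF n] unfolding D_def by blast
  have Ddec: "\<And>i j. i < j \<Longrightarrow> j < n \<Longrightarrow> D j < D i" using gv_facts(4)[OF n] unfolding D_def by blast
  define c where "c = (if k = n then 0 else - (D (k - 1) + D k) / 2)"
  have up: "c + D i > 0" if "i < k" for i
  proof (cases "k = n")
    case True then show ?thesis using Dpos that unfolding c_def by simp
  next
    case False
    have "i = k - 1 \<or> i < k - 1" using that by linarith
    then have "D (k - 1) \<le> D i" using Ddec[of i "k - 1"] that k False by (auto simp: less_imp_le)
    moreover have "D k < D (k - 1)" using Ddec[of "k - 1" k] k False by simp
    moreover have "c = - (D (k - 1) + D k) / 2" unfolding c_def using False by simp
    ultimately show ?thesis by (rule avg_lemma1)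
  qed
  have down: "c + D i < 0" if "k \<le> i" "i < n" for i
  proof -
    have kn: "k \<noteq> n" using that by simp
    have "D i \<le> D k" using Ddec[of k i] that by (cases "i = k") auto
    moreover have "D k < D (k - 1)" using Ddec[of "k - 1" k] k that by simp
    moreover have "c = - (D (k - 1) + D k) / 2" unfolding c_def using kn by simp
    ultimately show ?thesis by (rule avg_lemma2)
  qed
  define f where "f j = c * real j + gv n j" for j
  have fs: "f (Suc i) = f i + (c + D i)" for i unfolding f_def D_def by (simp add: algebra_simps)
  have "\<forall>j\<le>n. j \<noteq> k \<longrightarrow> f j < f k"
  proof (intro allI impI)
    fix j assume j: "j \<le> n" "j \<noteq> k"
    show "f j < f k"
    proof (cases "j < k")
      case True then show ?thesis using up_chain[of k f j] up fs by simp
    next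
      case False then show ?thesis using down_chain[of k n f j] down fs j by simp
    qed
  qed
  then show ?thesis unfolding f_def by blast
qed


lemma sep_fun:
  assumes n: "n \<ge> 1" and k: "k \<le> n" and s: "s \<in> {-1, 1::real}"
  shows "\<exists>\<alpha> \<beta>. \<forall>w\<in>polygon_vertices n - {(real k / real n, s * gv n k)}.
           \<alpha> * fst w + \<beta> * snd w < \<alpha> * (real k / real n) + \<beta> * (s * gv n k)"
proof (cases "k = 0")
  case True
  have g0: "gv n 0 = 0" using gv_facts(1)[OF n] .
  have "\<forall>w\<in>polygon_vertices n - {(real k / real n, s * gv n k)}. (-1) * fst w + 0 * snd w < (-1) * (real k / real n) + 0 * (s * gv n k)"
  proof
    fix w assume w: "w \<in> polygon_vertices n - {(real k / real n, s * gv n k)}"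
    then obtain j s' where wj: "w = (real j / real n, s' * gv n j)" "j \<le> n" unfolding PV_eq by auto
    have "j \<noteq> 0"
    proof
      assume "j = 0"
      then have "w = (real k / real n, s * gv n k)" using wj True g0 by simp
      then show False using w by simp
    qed
    then show "(-1) * fst w + 0 * snd w < (-1) * (real k / real n) + 0 * (s * gv n k)"
      using wj True n by simp
  qed
  then show ?thesis by blast
next
  case False
  then obtain c where c: "\<forall>j\<le>n. j \<noteq> k \<longrightarrow> c * real j + gv n j < c * real k + gv n k"
    using strict_max[OF n _ k] by auto
  have gpos: "\<And>j. 1 \<le> j \<Longrightarrow> j \<le> n \<Longrightarrow> gv n j > 0" using gv_facts(2)[OF n] .
  have g0: "gv n 0 = 0" using gv_facts(1)[OF n] .
  have ss: "s * s = 1" using s by auto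
  have "\<forall>w\<in>polygon_vertices n - {(real k / real n, s * gv n k)}.
           (c * real n) * fst w + s * snd w < (c * real n) * (real k / real n) + s * (s * gv n k)"
  proof
    fix w assume w: "w \<in> polygon_vertices n - {(real k / real n, s * gv n k)}"
    then obtain j s' where wj: "w = (real j / real n, s' * gv n j)" "j \<le> n" "s' \<in> {-1,1}" unfolding PV_eq by auto
    have nz: "real n \<noteq> 0" using n by simp
    have lhs: "(c * real n) * fst w + s * snd w = c * real j + (s * s') * gv n j" using wj nz by simp
    have rhs: "(c * real n) * (real k / real n) + s * (s * gv n k) = c * real k + gv n k" using nz ss
      by (simp add: mult.assoc[symmetric])
    have "c * real j + (s * s') * gv n j < c * real k + gv n k"
    proof (cases "s' = s")
      case True
      then have "j \<noteq> k" using w wj by auto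
      then show ?thesis using c wj True ss by simp
    next
      case False
      then have ss': "s * s' = -1" using s wj by auto
      have le: "c * real j + gv n j \<le> c * real k + gv n k" using c wj by (cases "j = k") (auto simp: less_imp_le)
      show ?thesis
      proof (cases "j = 0")
        case True
        then show ?thesis using c g0 False ss' \<open>k \<noteq> 0\<close> by (metis add.right_neutral mult_zero_right of_nat_0 zero_le)
      next
        case False
        then have "gv n j > 0" using gpos wj by simp
        then show ?thesis using le ss' by simp
      qed
    qed
    then show "(c * real n) * fst w + s * snd w < (c * real n) * (real k / real n) + s * (s * gv n k)"
      using lhs rhs by simp
  qed
  then show ?thesis by blast
qed

lemma vertex_extreme:
  assumes n: "n \<ge> 1" and vV: "v \<in> polygon_vertices n"
  shows "v extreme_point_of (convex hull (polygon_vertices n))"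
proof -
  obtain k s where v: "v = (real k / real n, s * gv n k)" and k: "k \<le> n" and s: "s \<in> {-1, 1::real}"
    using vV unfolding PV_eq by auto
  obtain \<alpha> \<beta> where ab: "\<forall>w\<in>polygon_vertices n - {v}. \<alpha> * fst w + \<beta> * snd w < \<alpha> * fst v + \<beta> * snd v"
    using sep_fun[OF n k s] unfolding v by auto
  define a where "a = (\<alpha>, \<beta>)"
  have inn: "inner a x = \<alpha> * fst x + \<beta> * snd x" for x unfolding a_def by (cases x) simp
  have sub: "polygon_vertices n - {v} \<subseteq> {x. inner a x < inner a v}" using ab inn by auto
  have "convex hull (polygon_vertices n - {v}) \<subseteq> {x. inner a x < inner a v}"
    by (rule hull_minimal[where S=convex, OF sub convex_halfspace_lt])
  then have nv: "v \<notin> convex hull (polygon_vertices n - {v})" by auto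
  have "v extreme_point_of (convex hull (insert v (polygon_vertices n - {v})))"
    using PV_finite nv by (intro extreme_point_of_convex_hull_insert) auto
  then show ?thesis using vV by (simp add: insert_absorb)
qed

theorem mainTheorem7:
  fixes n :: nat
  assumes "n \<ge> 1"
  shows "attainable n = convex hull (polygon_vertices n) \<and>
         (\<forall>v\<in>polygon_vertices n. v extreme_point_of (attainable n))"
proof -
  have eq: "attainable n = convex hull (polygon_vertices n)"
    using att_sub_hull[OF assms] hull_sub_att[OF assms] by blast
  show ?thesis using eq vertex_extreme[OF assms] by simp
qed

end
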